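(* Let $\nu_0=0$, $\gamma=0$ and $u>0$, and let $y(t;y_0)$ solve $\dot y=-sy(1-y)+u(1-y)$, $y(0)=y_0\in[0,1]$. Then $$g_r(y_0)=y_0\exp\Big(-s\int_0^r(1-y(\xi;y_0))\,d\xi\Big),\qquad y_0\in[0,1],$$ and in particular $$g_r(y_0)=\begin{cases}y_0\,\dfrac{u-s\,y(r;y_0)}{u-sy_0}, & y_0\in[0,1)\setminus\{u/s\},\\[6pt] y_0\,e^{-rs(1-y_0)}, & y_0\in\{u/s,1\}.\end{cases}$$ Furthermore $g_\infty(y_0)=\lim_{r\to\infty}g_r(y_0)$ exists and satisfies: (i) if $s=0$, then $g_\infty(y_0)=y_0$ for all $y_0\in[0,1]$; (ii) if $u\le s$, then $g_\infty(y_0)=0$ for $y_0\in[0,1)$ and $g_\infty(1)=1$; (iii) if $u>s$, then $g_\infty(y_0)=y_0\frac{u-s}{u-sy_0}$.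
   Context: Embedded ASG process $(a_r)_{r\ge0}$ (with $\gamma=0$, $\nu_0=0$): a random finite rooted tree started from a single unmarked root. Independently at each leaf $\ell$: at rate $s$, two children (left, right) are attached to $\ell$; at rate $u$, one child is attached and $\ell$ is marked $\times$. Typing: given types $c_\ell\in\{0,1\}$ at the leaves, types propagate to the root. A $\times$-marked vertex has type 1, and an outdegree-2 vertex has type 1 iff both children have type 1. Ancestral leaf $\lambda_v$: a leaf is its own ancestral leaf. For an outdegree-2 vertex, $\lambda_v$ is $\lambda$ of the right child if the right child has type 0, and $\lambda$ of the left child otherwise. For an outdegree-1 vertex, $\lambda_v$ is $\lambda$ of its child. $g_r(y_0)$ is the probability that the ancestral leaf of the root of $a_r$ has type 1, when the leaves are typed independently, each with type 1 with probability $y_0$. *)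

theory Defs
  imports "HOL-Probability.Probability"
begin

text \<open>Finite rooted trees of the embedded ASG: a leaf, a vertex marked by a
  mutation cross with one child, or a branching vertex with (left, right) children.\<close>
datatype asg_tree = Leaf | Mark asg_tree | Bin asg_tree asg_tree

text \<open>Law of the embedded ASG at time r, started from a single unmarked leaf.
  First-jump decomposition: the root leaf waits an Exp(s+u) time; at rate s it
  branches into two independent copies, at rate u it is marked and gets one child;
  the resulting subtrees evolve independently for the remaining time.\<close>
primrec asg_prob :: "real \<Rightarrow> real \<Rightarrow> asg_tree \<Rightarrow> real \<Rightarrow> real" where
  "asg_prob s u Leaf r = exp (- (s + u) * r)"
| "asg_prob s u (Mark t) r =
     integral {0..r} (\<lambda>\<tau>. u * exp (- (s + u) * \<tau>) * asg_prob s u t (r - \<tau>))"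
| "asg_prob s u (Bin l t) r =
     integral {0..r} (\<lambda>\<tau>. s * exp (- (s + u) * \<tau>) * asg_prob s u l (r - \<tau>) * asg_prob s u t (r - \<tau>))"

text \<open>Leaves addressed by paths (False = left / only child, True = right child).\<close>
primrec leaves :: "asg_tree \<Rightarrow> bool list set" where
  "leaves Leaf = {[]}"
| "leaves (Mark t) = Cons False ` leaves t"
| "leaves (Bin l r) = Cons False ` leaves l \<union> Cons True ` leaves r"

text \<open>Type of the root, given leaf types c (True = type 1).\<close>
primrec vtype :: "asg_tree \<Rightarrow> (bool list \<Rightarrow> bool) \<Rightarrow> bool" where
  "vtype Leaf c = c []"
| "vtype (Mark t) c = True"
| "vtype (Bin l r) c = (vtype l (c \<circ> Cons False) \<and> vtype r (c \<circ> Cons True))"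

primrec anc :: "asg_tree \<Rightarrow> (bool list \<Rightarrow> bool) \<Rightarrow> bool list" where
  "anc Leaf c = []"
| "anc (Mark t) c = False # anc t (c \<circ> Cons False)"
| "anc (Bin l r) c = (if \<not> vtype r (c \<circ> Cons True) then True # anc r (c \<circ> Cons True)
                      else False # anc l (c \<circ> Cons False))"

definition anc_type_prob :: "real \<Rightarrow> asg_tree \<Rightarrow> real" where
  "anc_type_prob y0 t =
     measure_pmf.prob (Pi_pmf (leaves t) False (\<lambda>_. bernoulli_pmf y0)) {c. c (anc t c)}"

definition g :: "real \<Rightarrow> real \<Rightarrow> real \<Rightarrow> real \<Rightarrow> real" where
  "g s u r y0 = (\<Sum>\<^sub>\<infinity>t. asg_prob s u t r * anc_type_prob y0 t)"

end

theory Submission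
  imports Defs
begin

abbreviation QQ :: "real \<Rightarrow> bool list set \<Rightarrow> (bool list \<Rightarrow> bool) pmf" where
  "QQ y0 L \<equiv> Pi_pmf L False (\<lambda>_. bernoulli_pmf y0)"

lemma finite_leaves: "finite (leaves t)"
  by (induction t) auto

lemma prob_pair_pmf:
  "measure_pmf.prob (pair_pmf M N) (A \<times> B) = measure_pmf.prob M A * measure_pmf.prob N B"
proof -
  have "measure_pmf.prob (pair_pmf M N) (A \<times> B) = measure_pmf.prob (pair_pmf M N) ((A \<times> B) \<inter> set_pmf (pair_pmf M N))"
    by (rule measure_Int_set_pmf[symmetric])
  also have "(A \<times> B) \<inter> set_pmf (pair_pmf M N) = (A \<inter> set_pmf M) \<times> (B \<inter> set_pmf N)" by auto
  also have "measure_pmf.prob (pair_pmf M N) \<dots> = measure_pmf.prob M (A \<inter> set_pmf M) * measure_pmf.prob N (B \<inter> set_pmf N)"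
    by (rule measure_pmf_prob_product) auto
  finally show ?thesis by (simp add: measure_Int_set_pmf)
qed

lemma mark_map:
  assumes "finite L"
  shows "map_pmf (\<lambda>c. c \<circ> Cons b) (QQ y0 (Cons b ` L)) = QQ y0 L"
  by (rule Pi_pmf_bij_betw[symmetric]) (auto simp: assms bij_betw_def inj_on_def)

lemma bin_map:
  assumes "finite L" "finite R"
  shows "map_pmf (\<lambda>c. (c \<circ> Cons False, c \<circ> Cons True)) (QQ y0 (Cons False ` L \<union> Cons True ` R))
         = pair_pmf (QQ y0 L) (QQ y0 R)"
proof -
  let ?A = "Cons False ` L" and ?B = "Cons True ` R"
  have "QQ y0 (?A \<union> ?B) = map_pmf (\<lambda>(f,g) x. if x \<in> ?A then f x else g x) (pair_pmf (QQ y0 ?A) (QQ y0 ?B))"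
    by (rule Pi_pmf_union) (use assms in auto)
  hence "map_pmf (\<lambda>c. (c \<circ> Cons False, c \<circ> Cons True)) (QQ y0 (?A \<union> ?B))
      = map_pmf (\<lambda>(f,g). ((\<lambda>x. if x \<in> ?A then f x else g x) \<circ> Cons False, (\<lambda>x. if x \<in> ?A then f x else g x) \<circ> Cons True)) (pair_pmf (QQ y0 ?A) (QQ y0 ?B))"
    by (simp add: pmf.map_comp case_prod_unfold o_def)
  also have "\<dots> = map_pmf (\<lambda>(f,g). (f \<circ> Cons False, g \<circ> Cons True)) (pair_pmf (QQ y0 ?A) (QQ y0 ?B))"
  proof (rule pmf.map_cong[OF refl])
    fix z assume z: "z \<in> set_pmf (pair_pmf (QQ y0 ?A) (QQ y0 ?B))"
    obtain f g where fg: "z = (f, g)" by (cases z)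
    have sA: "set_pmf (QQ y0 ?A) \<subseteq> {f. \<forall>x. x \<notin> ?A \<longrightarrow> f x = False}"
      by (rule set_Pi_pmf_subset) (use assms in auto)
    have sB: "set_pmf (QQ y0 ?B) \<subseteq> {f. \<forall>x. x \<notin> ?B \<longrightarrow> f x = False}"
      by (rule set_Pi_pmf_subset) (use assms in auto)
    have f: "\<forall>x. x \<notin> ?A \<longrightarrow> f x = False" and g: "\<forall>x. x \<notin> ?B \<longrightarrow> g x = False"
      using z fg sA sB by auto
    show "(case z of (f,g) \<Rightarrow> ((\<lambda>x. if x \<in> ?A then f x else g x) \<circ> Cons False, (\<lambda>x. if x \<in> ?A then f x else g x) \<circ> Cons True))
        = (case z of (f,g) \<Rightarrow> (f \<circ> Cons False, g \<circ> Cons True))"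
      using f g by (auto simp: fg fun_eq_iff)
  qed
  also have "\<dots> = pair_pmf (QQ y0 L) (QQ y0 R)"
    by (simp add: map_pair mark_map assms)
  finally show ?thesis .
qed

definition vprob :: "real \<Rightarrow> asg_tree \<Rightarrow> real" where
  "vprob y0 t = measure_pmf.prob (QQ y0 (leaves t)) {c. vtype t c}"

lemma not_vtype_anc: "\<not> vtype t c \<Longrightarrow> \<not> c (anc t c)"
  by (induction t arbitrary: c) (auto simp: o_def split: if_splits)

lemma leaf_prob:
  assumes "0 \<le> y0" "y0 \<le> 1"
  shows "measure_pmf.prob (QQ y0 {[]}) {c. c []} = y0"
proof -
  have "measure_pmf.prob (QQ y0 {[]}) {c. c []} = measure_pmf.prob (map_pmf (\<lambda>c. c []) (QQ y0 {[]})) {True}"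
    by (simp add: vimage_def)
  also have "map_pmf (\<lambda>c. c []) (QQ y0 {[]}) = bernoulli_pmf y0"
    by (subst Pi_pmf_component) auto
  finally show ?thesis using assms by (simp add: measure_pmf_single)
qed

lemma vprob_Leaf: "0 \<le> y0 \<Longrightarrow> y0 \<le> 1 \<Longrightarrow> vprob y0 Leaf = y0"
  by (simp add: vprob_def leaf_prob)

lemma atp_Leaf: "0 \<le> y0 \<Longrightarrow> y0 \<le> 1 \<Longrightarrow> anc_type_prob y0 Leaf = y0"
  by (simp add: anc_type_prob_def leaf_prob)

lemma vprob_Mark: "vprob y0 (Mark t) = 1"
  by (simp add: vprob_def)

lemma atp_Mark: "anc_type_prob y0 (Mark t) = anc_type_prob y0 t"
proof -
  have "anc_type_prob y0 (Mark t) = measure_pmf.prob (QQ y0 (Cons False ` leaves t)) ((\<lambda>c. c \<circ> Cons False) -` {c. c (anc t c)})"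
    by (simp add: anc_type_prob_def vimage_def)
  also have "\<dots> = measure_pmf.prob (map_pmf (\<lambda>c. c \<circ> Cons False) (QQ y0 (Cons False ` leaves t))) {c. c (anc t c)}"
    by simp
  also have "\<dots> = anc_type_prob y0 t" by (simp add: mark_map finite_leaves anc_type_prob_def)
  finally show ?thesis .
qed

lemma vprob_Bin: "vprob y0 (Bin l r) = vprob y0 l * vprob y0 r"
proof -
  have "vprob y0 (Bin l r) = measure_pmf.prob (QQ y0 (Cons False ` leaves l \<union> Cons True ` leaves r))
      ((\<lambda>c. (c \<circ> Cons False, c \<circ> Cons True)) -` ({c. vtype l c} \<times> {c. vtype r c}))"
    by (simp add: vprob_def vimage_def)
  also have "\<dots> = measure_pmf.prob (pair_pmf (QQ y0 (leaves l)) (QQ y0 (leaves r))) ({c. vtype l c} \<times> {c. vtype r c})"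
    by (simp only: bin_map[OF finite_leaves finite_leaves, symmetric] measure_map_pmf)
  finally show ?thesis by (simp add: prob_pair_pmf vprob_def)
qed

lemma atp_Bin: "anc_type_prob y0 (Bin l r) = anc_type_prob y0 l * vprob y0 r"
proof -
  have "{c. c (anc (Bin l r) c)} = (\<lambda>c. (c \<circ> Cons False, c \<circ> Cons True)) -` ({c. c (anc l c)} \<times> {c. vtype r c})"
    using not_vtype_anc[of r] by (auto simp: o_def)
  hence "anc_type_prob y0 (Bin l r) = measure_pmf.prob (QQ y0 (Cons False ` leaves l \<union> Cons True ` leaves r))
      ((\<lambda>c. (c \<circ> Cons False, c \<circ> Cons True)) -` ({c. c (anc l c)} \<times> {c. vtype r c}))"
    by (simp add: anc_type_prob_def)
  also have "\<dots> = measure_pmf.prob (pair_pmf (QQ y0 (leaves l)) (QQ y0 (leaves r))) ({c. c (anc l c)} \<times> {c. vtype r c})"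
    by (simp only: bin_map[OF finite_leaves finite_leaves, symmetric] measure_map_pmf)
  finally show ?thesis by (simp add: prob_pair_pmf vprob_def anc_type_prob_def)
qed

lemma vprob_bounds: "0 \<le> vprob y0 t" "vprob y0 t \<le> 1"
  by (simp_all add: vprob_def)
lemma atp_bounds: "0 \<le> anc_type_prob y0 t" "anc_type_prob y0 t \<le> 1"
  by (simp_all add: anc_type_prob_def)

lemma at0: "(x::real) \<ge> 0 \<Longrightarrow> at x within {0..} = at x within {0..x+1}"
  by (rule at_within_nhd[where S="{..<x+1}"]) auto

lemma at0_interior: "(x::real) > 0 \<Longrightarrow> at x within {0..} = at x"
  by (rule at_within_interior) auto

lemma D_int:
  assumes "continuous_on {0..} F" "x \<ge> 0"
  shows "((\<lambda>r. integral {0..r} F) has_real_derivative F x) (at x within {0..})"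
proof -
  have "continuous_on {0..x+1} F" by (rule continuous_on_subset[OF assms(1)]) auto
  from integral_has_real_derivative[OF this, of x] assms(2)
  show ?thesis by (simp add: at0[OF assms(2)])
qed

lemma cont_from_deriv:
  assumes "\<And>t. t \<ge> 0 \<Longrightarrow> (f has_real_derivative f' t) (at t within {0..})"
  shows "continuous_on {0..} f"
  unfolding continuous_on_eq_continuous_within
proof (intro ballI)
  fix x :: real assume "x \<in> {0..}"
  thus "continuous (at x within {0..}) f" by (intro DERIV_continuous[OF assms]) auto
qed

lemma lin_ode:
  assumes k: "continuous_on {0..} k"
    and w: "\<And>t. t \<ge> 0 \<Longrightarrow> (w has_real_derivative k t * w t) (at t within {0..})"
    and r: "r \<ge> 0"
  shows "w r = w 0 * exp (integral {0..r} k)"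
proof -
  define h where "h t = w t * exp (- integral {0..t} k)" for t
  have hd: "(h has_real_derivative 0) (at t within {0..})" if "t \<ge> 0" for t
  proof -
    have i: "((\<lambda>t. integral {0..t} k) has_real_derivative k t) (at t within {0..})"
      by (rule D_int[OF k that])
    show ?thesis unfolding h_def
      by (auto intro!: derivative_eq_intros i w that simp: algebra_simps)
  qed
  have "h r = h 0"
  proof (cases "r = 0")
    case False
    hence "r > 0" using r by simp
    show ?thesis
    proof (rule DERIV_isconst_end[OF \<open>r > 0\<close>])
      show "continuous_on {0..r} h"
        by (rule continuous_on_subset[OF cont_from_deriv[OF hd]]) auto
      fix x :: real assume "0 < x" "x < r"
      thus "DERIV h x :> 0" using hd[of x] at0_interior[of x] by simp
    qed
  qed simp
  thus ?thesis by (simp add: h_def exp_minus field_simps)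
qed

lemma conv_reflect:
  assumes "\<psi> integrable_on {0..r}"
  shows "integral {0..r} (\<lambda>\<tau>. \<psi> (r - \<tau>)) = integral {0..(r::real)} \<psi>"
proof -
  have "(\<psi> has_integral integral {0..r} \<psi>) (cbox 0 r)"
    using assms by (simp add: has_integral_integral)
  from has_integral_affinity[OF this, of "-1" r]
  have "((\<lambda>x. \<psi> (r - x)) has_integral integral {0..r} \<psi>) ((\<lambda>x. r - x) ` {0..r})"
    by simp
  moreover have "(\<lambda>x. r - x) ` {0..r} = {0..r}"
    by (auto simp: image_iff intro!: bexI[where x="r - _"])
  ultimately show ?thesis by (simp add: integral_unique)
qed

lemma conv_form:
  fixes K c r :: real
  assumes "continuous_on {0..} \<phi>" "r \<ge> 0"
  shows "integral {0..r} (\<lambda>\<tau>. K * exp (- c * \<tau>) * \<phi> (r - \<tau>))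
       = K * exp (- c * r) * integral {0..r} (\<lambda>\<sigma>. exp (c * \<sigma>) * \<phi> \<sigma>)"
proof -
  have "(\<lambda>\<tau>. K * exp (- c * \<tau>) * \<phi> (r - \<tau>)) = (\<lambda>\<tau>. (K * exp (- c * r)) * (exp (c * (r - \<tau>)) * \<phi> (r - \<tau>)))"
  proof
    fix \<tau> :: real
    have e: "exp (- c * \<tau>) = exp (- c * r) * exp (c * (r - \<tau>))"
      by (simp add: mult_exp_exp algebra_simps)
    show "K * exp (- c * \<tau>) * \<phi> (r - \<tau>) = (K * exp (- c * r)) * (exp (c * (r - \<tau>)) * \<phi> (r - \<tau>))"
      by (simp only: e)
  qed
  hence "integral {0..r} (\<lambda>\<tau>. K * exp (- c * \<tau>) * \<phi> (r - \<tau>))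
      = (K * exp (- c * r)) * integral {0..r} (\<lambda>\<tau>. exp (c * (r - \<tau>)) * \<phi> (r - \<tau>))"
    by simp
  also have "integral {0..r} (\<lambda>\<tau>. exp (c * (r - \<tau>)) * \<phi> (r - \<tau>)) = integral {0..r} (\<lambda>\<sigma>. exp (c * \<sigma>) * \<phi> \<sigma>)"
  proof (rule conv_reflect[where \<psi>="\<lambda>\<sigma>. exp (c * \<sigma>) * \<phi> \<sigma>"])
    have "continuous_on {0..r} \<phi>" by (rule continuous_on_subset[OF assms(1)]) auto
    thus "(\<lambda>\<sigma>. exp (c * \<sigma>) * \<phi> \<sigma>) integrable_on {0..r}"
      by (intro integrable_continuous_real continuous_intros)
  qed
  finally show ?thesis .
qed

fun ht :: "asg_tree \<Rightarrow> nat" where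
  "ht Leaf = 0"
| "ht (Mark t) = Suc (ht t)"
| "ht (Bin l t) = Suc (max (ht l) (ht t))"

definition SS :: "nat \<Rightarrow> asg_tree set" where "SS n = {t. ht t \<le> n}"

lemma SS_0: "SS 0 = {Leaf}"
  unfolding SS_def by (auto elim: ht.elims)

lemma SS_Suc: "SS (Suc n) = insert Leaf (Mark ` SS n \<union> (\<lambda>(l,t). Bin l t) ` (SS n \<times> SS n))"
proof (rule set_eqI)
  fix x show "x \<in> SS (Suc n) \<longleftrightarrow> x \<in> insert Leaf (Mark ` SS n \<union> (\<lambda>(l,t). Bin l t) ` (SS n \<times> SS n))"
    by (cases x) (auto simp: SS_def image_iff)
qed

lemma finite_SS: "finite (SS n)"
  by (induction n) (auto simp: SS_0 SS_Suc)

lemma SS_mono: "m \<le> n \<Longrightarrow> SS m \<subseteq> SS n"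
  by (auto simp: SS_def)

lemma finite_in_SS: "finite F \<Longrightarrow> \<exists>n. F \<subseteq> SS n"
proof (induction F rule: finite_induct)
  case (insert x F)
  then obtain n where "F \<subseteq> SS n" by blast
  hence "insert x F \<subseteq> SS (max n (ht x))" using SS_mono[of n "max n (ht x)"] by (auto simp: SS_def)
  thus ?case by blast
qed simp

lemma sum_SS_Suc:
  "(\<Sum>t\<in>SS (Suc n). f t) = f Leaf + (\<Sum>t\<in>SS n. f (Mark t)) + (\<Sum>l\<in>SS n. \<Sum>t\<in>SS n. f (Bin l t))"
proof -
  have d1: "Leaf \<notin> Mark ` SS n \<union> (\<lambda>(l,t). Bin l t) ` (SS n \<times> SS n)" by auto
  have d2: "Mark ` SS n \<inter> (\<lambda>(l,t). Bin l t) ` (SS n \<times> SS n) = {}" by auto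
  have "(\<Sum>t\<in>SS (Suc n). f t) = f Leaf + (\<Sum>t\<in>Mark ` SS n. f t) + (\<Sum>t\<in>(\<lambda>(l,t). Bin l t) ` (SS n \<times> SS n). f t)"
    unfolding SS_Suc using d1 d2 finite_SS by (simp add: sum.union_disjoint add.assoc)
  also have "(\<Sum>t\<in>Mark ` SS n. f t) = (\<Sum>t\<in>SS n. f (Mark t))"
    by (rule sum.reindex_cong[where l=Mark]) (auto simp: inj_on_def)
  also have "(\<Sum>t\<in>(\<lambda>(l,t). Bin l t) ` (SS n \<times> SS n). f t) = (\<Sum>(l,t)\<in>SS n \<times> SS n. f (Bin l t))"
    by (rule sum.reindex_cong[where l="\<lambda>(l,t). Bin l t"]) (auto simp: inj_on_def)
  also have "\<dots> = (\<Sum>l\<in>SS n. \<Sum>t\<in>SS n. f (Bin l t))"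
    by (rule sum.cartesian_product[symmetric])
  finally show ?thesis .
qed

context
  fixes s u :: real
  assumes s: "s \<ge> 0" and u: "u > 0"
begin

abbreviation "PP \<equiv> asg_prob s u"

lemma cont_int:
  fixes F :: "real \<Rightarrow> real"
  assumes "continuous_on {0..} F" shows "continuous_on {0..} (\<lambda>r. integral {0..r} F)"
proof -
  have "\<And>t. t \<ge> 0 \<Longrightarrow> ((\<lambda>r. integral {0..r} F) has_real_derivative F t) (at t within {0..})"
    using D_int assms by blast
  thus ?thesis by (rule cont_from_deriv)
qed

lemma P_Mark:
  assumes "continuous_on {0..} (PP t)" "r \<ge> 0"
  shows "PP (Mark t) r = u * exp (- (s + u) * r) * integral {0..r} (\<lambda>\<sigma>. exp ((s + u) * \<sigma>) * PP t \<sigma>)"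
  using conv_form[OF assms, of u "s+u"] by simp

lemma P_Bin:
  assumes "continuous_on {0..} (PP l)" "continuous_on {0..} (PP t)" "r \<ge> 0"
  shows "PP (Bin l t) r = s * exp (- (s + u) * r) * integral {0..r} (\<lambda>\<sigma>. exp ((s + u) * \<sigma>) * (PP l \<sigma> * PP t \<sigma>))"
proof -
  have c: "continuous_on {0..} (\<lambda>x. PP l x * PP t x)" using assms by (intro continuous_intros)
  have "PP (Bin l t) r = integral {0..r} (\<lambda>\<tau>. s * exp (- (s + u) * \<tau>) * (\<lambda>x. PP l x * PP t x) (r - \<tau>))"
    by (simp add: mult.assoc)
  also have "\<dots> = s * exp (- (s + u) * r) * integral {0..r} (\<lambda>\<sigma>. exp ((s + u) * \<sigma>) * (PP l \<sigma> * PP t \<sigma>))"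
    by (rule conv_form[OF c assms(3)])
  finally show ?thesis .
qed

lemma P_props: "continuous_on {0..} (PP t) \<and> (\<forall>r\<ge>0. PP t r \<ge> 0)"
proof (induction t)
  case Leaf
  have "continuous_on {0..} (\<lambda>r. exp (- (s + u) * r))" by (intro continuous_intros)
  thus ?case by simp
next
  case (Mark t)
  from Mark have mc: "continuous_on {0..} (PP t)" and mn: "\<And>r. r \<ge> 0 \<Longrightarrow> PP t r \<ge> 0" by auto
  have ce: "continuous_on {0..} (\<lambda>\<sigma>. exp ((s + u) * \<sigma>) * PP t \<sigma>)"
    by (intro continuous_intros mc)
  have i: "continuous_on {0..} (\<lambda>r. integral {0..r} (\<lambda>\<sigma>. exp ((s + u) * \<sigma>) * PP t \<sigma>))"
    by (rule cont_int[OF ce])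
  have c: "continuous_on {0..} (\<lambda>r. u * exp (- (s + u) * r) * integral {0..r} (\<lambda>\<sigma>. exp ((s + u) * \<sigma>) * PP t \<sigma>))"
    by (intro continuous_intros i)
  have "continuous_on {0..} (PP (Mark t))"
    by (rule continuous_on_cong[THEN iffD1, OF refl _ c], rule P_Mark[OF mc, symmetric], simp)
  moreover have "PP (Mark t) r \<ge> 0" if "r \<ge> 0" for r
  proof -
    have cr: "continuous_on {0..r} (\<lambda>\<sigma>. exp ((s + u) * \<sigma>) * PP t \<sigma>)" by (rule continuous_on_subset[OF ce]) auto
    have "0 \<le> integral {0..r} (\<lambda>\<sigma>. exp ((s + u) * \<sigma>) * PP t \<sigma>)"
      by (rule integral_nonneg[OF integrable_continuous_real[OF cr]]) (simp add: mn)
    thus ?thesis using P_Mark[OF mc that] u by simp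
  qed
  ultimately show ?case by blast
next
  case (Bin l t)
  from Bin have mc: "continuous_on {0..} (PP t)" and mn: "\<And>r. r \<ge> 0 \<Longrightarrow> PP t r \<ge> 0" by auto
  from Bin have lc: "continuous_on {0..} (PP l)" and ln: "\<And>r. r \<ge> 0 \<Longrightarrow> PP l r \<ge> 0" by auto
  have ce: "continuous_on {0..} (\<lambda>\<sigma>. exp ((s + u) * \<sigma>) * (PP l \<sigma> * PP t \<sigma>))"
    by (intro continuous_intros mc lc)
  have i: "continuous_on {0..} (\<lambda>r. integral {0..r} (\<lambda>\<sigma>. exp ((s + u) * \<sigma>) * (PP l \<sigma> * PP t \<sigma>)))"
    by (rule cont_int[OF ce])
  have c: "continuous_on {0..} (\<lambda>r. s * exp (- (s + u) * r) * integral {0..r} (\<lambda>\<sigma>. exp ((s + u) * \<sigma>) * (PP l \<sigma> * PP t \<sigma>)))"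
    by (intro continuous_intros i)
  have "continuous_on {0..} (PP (Bin l t))"
    by (rule continuous_on_cong[THEN iffD1, OF refl _ c], rule P_Bin[OF lc mc, symmetric], simp)
  moreover have "PP (Bin l t) r \<ge> 0" if "r \<ge> 0" for r
  proof -
    have cr: "continuous_on {0..r} (\<lambda>\<sigma>. exp ((s + u) * \<sigma>) * (PP l \<sigma> * PP t \<sigma>))" by (rule continuous_on_subset[OF ce]) auto
    have "0 \<le> integral {0..r} (\<lambda>\<sigma>. exp ((s + u) * \<sigma>) * (PP l \<sigma> * PP t \<sigma>))"
      by (rule integral_nonneg[OF integrable_continuous_real[OF cr]]) (simp add: mn ln)
    thus ?thesis using P_Bin[OF lc mc that] s by simp
  qed
  ultimately show ?case by blast
qed

lemma P_cont: "continuous_on {0..} (PP t)" and P_nonneg: "r \<ge> 0 \<Longrightarrow> PP t r \<ge> 0"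
  using P_props by auto

lemma P_cont_r: "continuous_on {0..r} (PP t)"
  by (rule continuous_on_subset[OF P_cont]) auto

lemma P_int: "(\<lambda>\<sigma>. f \<sigma> * PP t \<sigma>) integrable_on {0..r}" if "continuous_on {0..r} f"
  using that by (intro integrable_continuous_real continuous_intros P_cont_r)

lemma rec_sum:
  assumes r: "r \<ge> 0"
  shows "(\<Sum>t\<in>SS (Suc n). PP t r * w t) = exp (- (s + u) * r) * (w Leaf + integral {0..r}
     (\<lambda>\<sigma>. exp ((s + u) * \<sigma>) * (u * (\<Sum>t\<in>SS n. PP t \<sigma> * w (Mark t)) + s * (\<Sum>l\<in>SS n. \<Sum>t\<in>SS n. PP l \<sigma> * PP t \<sigma> * w (Bin l t)))))"
proof -
  let ?e = "\<lambda>\<sigma>::real. exp ((s + u) * \<sigma>)"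
  define I1 where "I1 t = integral {0..r} (\<lambda>\<sigma>. ?e \<sigma> * PP t \<sigma>)" for t
  define I2 where "I2 l t = integral {0..r} (\<lambda>\<sigma>. ?e \<sigma> * (PP l \<sigma> * PP t \<sigma>))" for l t
  have int1: "(\<lambda>\<sigma>. ?e \<sigma> * PP t \<sigma>) integrable_on {0..r}" for t
    by (intro integrable_continuous_real continuous_intros P_cont_r)
  have int2: "(\<lambda>\<sigma>. ?e \<sigma> * (PP l \<sigma> * PP t \<sigma>)) integrable_on {0..r}" for l t
    by (intro integrable_continuous_real continuous_intros P_cont_r)
  have eq: "(\<lambda>\<sigma>. ?e \<sigma> * (u * (\<Sum>t\<in>SS n. PP t \<sigma> * w (Mark t)) + s * (\<Sum>l\<in>SS n. \<Sum>t\<in>SS n. PP l \<sigma> * PP t \<sigma> * w (Bin l t))))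
     = (\<lambda>\<sigma>. (\<Sum>t\<in>SS n. (u * w (Mark t)) * (?e \<sigma> * PP t \<sigma>)) + (\<Sum>l\<in>SS n. \<Sum>t\<in>SS n. (s * w (Bin l t)) * (?e \<sigma> * (PP l \<sigma> * PP t \<sigma>))))"
    by (auto simp: fun_eq_iff sum_distrib_left algebra_simps)
  have "integral {0..r} (\<lambda>\<sigma>. (\<Sum>t\<in>SS n. (u * w (Mark t)) * (?e \<sigma> * PP t \<sigma>)) + (\<Sum>l\<in>SS n. \<Sum>t\<in>SS n. (s * w (Bin l t)) * (?e \<sigma> * (PP l \<sigma> * PP t \<sigma>))))
     = (\<Sum>t\<in>SS n. (u * w (Mark t)) * I1 t) + (\<Sum>l\<in>SS n. \<Sum>t\<in>SS n. (s * w (Bin l t)) * I2 l t)"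
    unfolding I1_def I2_def
    apply (subst integral_add)
      apply (intro integrable_continuous_real continuous_intros P_cont_r)
     apply (intro integrable_continuous_real continuous_intros P_cont_r)
    apply (subst integral_sum, rule finite_SS, intro integrable_continuous_real continuous_intros P_cont_r)
    apply (subst integral_sum, rule finite_SS, intro integrable_continuous_real continuous_intros P_cont_r)
    apply (subst integral_sum, rule finite_SS, intro integrable_continuous_real continuous_intros P_cont_r)
    apply simp
    done
  moreover have "(\<Sum>t\<in>SS (Suc n). PP t r * w t) = exp (- (s + u) * r) * w Leaf
      + (\<Sum>t\<in>SS n. (u * exp (- (s + u) * r) * I1 t) * w (Mark t))
      + (\<Sum>l\<in>SS n. \<Sum>t\<in>SS n. (s * exp (- (s + u) * r) * I2 l t) * w (Bin l t))"
    unfolding sum_SS_Suc I1_def I2_def using P_Mark[OF P_cont r] P_Bin[OF P_cont P_cont r] by simp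
  ultimately show ?thesis
    unfolding eq by (simp add: algebra_simps sum_distrib_left)
qed

end

lemma sum_lim:
  fixes h :: "asg_tree \<Rightarrow> real"
  assumes nn: "\<And>t. h t \<ge> 0" and bd: "\<And>n. sum h (SS n) \<le> K"
  shows "h summable_on UNIV" and "(\<lambda>n. sum h (SS n)) \<longlonglongrightarrow> infsum h UNIV"
proof -
  have le: "sum h F \<le> K" if fin: "finite F" for F
  proof -
    obtain n where "F \<subseteq> SS n" using finite_in_SS[OF fin] by blast
    hence "sum h F \<le> sum h (SS n)" by (intro sum_mono2 finite_SS nn)
    thus ?thesis using bd[of n] by simp
  qed
  show sm: "h summable_on UNIV"
    by (rule nonneg_bdd_above_summable_on) (use nn le in \<open>auto simp: bdd_above_def\<close>)
  have hs: "(sum h \<longlongrightarrow> infsum h UNIV) (finite_subsets_at_top UNIV)"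
    using has_sum_infsum[OF sm] by (simp add: has_sum_def)
  have fl: "filterlim SS (finite_subsets_at_top UNIV) sequentially"
    unfolding filterlim_finite_subsets_at_top
  proof (intro allI impI)
    fix X :: "asg_tree set" assume "finite X \<and> X \<subseteq> UNIV"
    then obtain m where m: "X \<subseteq> SS m" using finite_in_SS by blast
    show "eventually (\<lambda>n. finite (SS n) \<and> X \<subseteq> SS n \<and> SS n \<subseteq> UNIV) sequentially"
      by (rule eventually_sequentiallyI[of m]) (use m SS_mono finite_SS in blast)
  qed
  show "(\<lambda>n. sum h (SS n)) \<longlonglongrightarrow> infsum h UNIV"
    by (rule filterlim_compose[OF hs fl])
qed

lemma limit_eq:
  fixes c x0 r :: real and F :: "nat \<Rightarrow> real \<Rightarrow> real"
  assumes X: "\<And>n. X (Suc n) = exp (- c * r) * (x0 + integral {0..r} (F n))"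
    and Fi: "\<And>n. F n integrable_on {0..r}"
    and mono: "\<And>n \<sigma>. \<sigma> \<in> {0..r} \<Longrightarrow> F n \<sigma> \<le> F (Suc n) \<sigma>"
    and conv: "\<And>\<sigma>. \<sigma> \<in> {0..r} \<Longrightarrow> (\<lambda>n. F n \<sigma>) \<longlonglongrightarrow> G \<sigma>"
    and Xc: "X \<longlonglongrightarrow> L"
  shows "G integrable_on {0..r} \<and> L = exp (- c * r) * (x0 + integral {0..r} G)"
proof -
  have ieq: "integral {0..r} (F n) = exp (c * r) * X (Suc n) - x0" for n
    using X[of n] by (simp add: exp_minus field_simps)
  have "(\<lambda>n. exp (c * r) * X (Suc n) - x0) \<longlonglongrightarrow> exp (c * r) * L - x0"
    by (intro tendsto_intros LIMSEQ_Suc Xc)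
  hence "bounded (range (\<lambda>n. integral {0..r} (F n)))"
    unfolding ieq by (rule convergent_imp_bounded)
  from monotone_convergence_increasing[OF Fi mono conv this]
  have Gi: "G integrable_on {0..r}" and lim: "(\<lambda>n. integral {0..r} (F n)) \<longlonglongrightarrow> integral {0..r} G"
    by auto
  have "(\<lambda>n. X (Suc n)) \<longlonglongrightarrow> exp (- c * r) * (x0 + integral {0..r} G)"
    unfolding X by (intro tendsto_intros lim)
  moreover have "(\<lambda>n. X (Suc n)) \<longlonglongrightarrow> L" by (rule LIMSEQ_Suc[OF Xc])
  ultimately have "L = exp (- c * r) * (x0 + integral {0..r} G)" using LIMSEQ_unique by blast
  with Gi show ?thesis by blast
qed

lemma cont_eq:
  fixes c x0 :: real and G X :: "real \<Rightarrow> real"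
  assumes eq: "\<And>r. r \<ge> 0 \<Longrightarrow> G integrable_on {0..r} \<and> X r = exp (- c * r) * (x0 + integral {0..r} G)"
  shows "continuous_on {0..} X"
  unfolding continuous_on_eq_continuous_within
proof (intro ballI)
  fix x :: real assume "x \<in> {0..}"
  hence x: "x \<ge> 0" by simp
  have "continuous_on {0..x+1} (\<lambda>r. integral {0..r} G)"
    by (rule indefinite_integral_continuous_1) (use eq[of "x+1"] x in auto)
  hence "continuous_on {0..x+1} (\<lambda>r. exp (- c * r) * (x0 + integral {0..r} G))"
    by (intro continuous_intros)
  have eq2: "\<And>r. r \<ge> 0 \<Longrightarrow> X r = exp (- c * r) * (x0 + integral {0..r} G)" using eq by blast
  have "continuous_on {0..x+1} X"
    by (rule continuous_on_cong[THEN iffD1, OF refl _ \<open>continuous_on {0..x+1} (\<lambda>r. exp (- c * r) * (x0 + integral {0..r} G))\<close>]) (simp add: eq2)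
  hence "continuous (at x within {0..x+1}) X"
    using x by (simp add: continuous_on_eq_continuous_within)
  thus "continuous (at x within {0..}) X" by (simp add: at0[OF x])
qed

lemma deriv_eq:
  fixes c x0 :: real and G X :: "real \<Rightarrow> real"
  assumes eq: "\<And>r. r \<ge> 0 \<Longrightarrow> X r = exp (- c * r) * (x0 + integral {0..r} G)"
    and Gc: "continuous_on {0..} G" and r: "r \<ge> 0"
  shows "(X has_real_derivative (- c * X r + exp (- c * r) * G r)) (at r within {0..})"
proof -
  have i: "((\<lambda>r. integral {0..r} G) has_real_derivative G r) (at r within {0..})"
    by (rule D_int[OF Gc r])
  have "((\<lambda>r. exp (- c * r) * (x0 + integral {0..r} G)) has_real_derivative
      (- c * (exp (- c * r) * (x0 + integral {0..r} G)) + exp (- c * r) * G r)) (at r within {0..})"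
    by (auto intro!: derivative_eq_intros i simp: algebra_simps)
  hence "((\<lambda>r. exp (- c * r) * (x0 + integral {0..r} G)) has_real_derivative
      (- c * X r + exp (- c * r) * G r)) (at r within {0..})"
    using eq[OF r] by simp
  thus ?thesis
    by (rule has_field_derivative_transform_within[where d=1]) (use r eq in auto)
qed

context
  fixes s u :: real
  assumes s: "s \<ge> 0" and u: "u > 0"
begin

abbreviation "PP' \<equiv> asg_prob s u"

lemma exp_int: "r \<ge> 0 \<Longrightarrow> integral {0..r} (\<lambda>\<sigma>. (s + u) * exp ((s + u) * \<sigma>)) = exp ((s + u) * r) - 1"
proof -
  assume r: "r \<ge> 0"
  have "((\<lambda>\<sigma>. (s + u) * exp ((s + u) * \<sigma>)) has_integral (exp ((s + u) * r) - exp ((s + u) * 0))) {0..r}"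
  proof (rule fundamental_theorem_of_calculus[OF r])
    fix x :: real assume "x \<in> {0..r}"
    have "((\<lambda>\<sigma>. exp ((s + u) * \<sigma>)) has_real_derivative exp ((s + u) * x) * (s + u)) (at x within {0..r})"
      by (auto intro!: derivative_eq_intros)
    thus "((\<lambda>\<sigma>. exp ((s + u) * \<sigma>)) has_vector_derivative (s + u) * exp ((s + u) * x)) (at x within {0..r})"
      by (simp add: has_real_derivative_iff_has_vector_derivative mult.commute)
  qed
  hence "integral {0..r} (\<lambda>\<sigma>. (s + u) * exp ((s + u) * \<sigma>)) = exp ((s + u) * r) - exp ((s + u) * 0)"
    by (rule integral_unique)
  thus ?thesis by simp
qed

lemma M_le1: "r \<ge> 0 \<Longrightarrow> (\<Sum>t\<in>SS n. PP' t r) \<le> 1"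
proof (induction n arbitrary: r)
  case 0
  have "(- s - u) * r \<le> 0" using s u 0 by (intro mult_nonpos_nonneg) auto
  thus ?case by (simp add: SS_0)
next
  case (Suc n)
  have "(\<Sum>t\<in>SS (Suc n). PP' t r) = (\<Sum>t\<in>SS (Suc n). PP' t r * 1)" by simp
  also have "\<dots> = exp (- (s + u) * r) * (1 + integral {0..r}
     (\<lambda>\<sigma>. exp ((s + u) * \<sigma>) * (u * (\<Sum>t\<in>SS n. PP' t \<sigma> * 1) + s * (\<Sum>l\<in>SS n. \<Sum>t\<in>SS n. PP' l \<sigma> * PP' t \<sigma> * 1))))"
    by (rule rec_sum[OF s u Suc.prems])
  also have "\<dots> \<le> exp (- (s + u) * r) * (1 + integral {0..r} (\<lambda>\<sigma>. (s + u) * exp ((s + u) * \<sigma>)))"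
  proof -
    have "integral {0..r} (\<lambda>\<sigma>. exp ((s + u) * \<sigma>) * (u * (\<Sum>t\<in>SS n. PP' t \<sigma> * 1) + s * (\<Sum>l\<in>SS n. \<Sum>t\<in>SS n. PP' l \<sigma> * PP' t \<sigma> * 1)))
       \<le> integral {0..r} (\<lambda>\<sigma>. (s + u) * exp ((s + u) * \<sigma>))"
    proof (rule integral_le)
      show "(\<lambda>\<sigma>. exp ((s + u) * \<sigma>) * (u * (\<Sum>t\<in>SS n. PP' t \<sigma> * 1) + s * (\<Sum>l\<in>SS n. \<Sum>t\<in>SS n. PP' l \<sigma> * PP' t \<sigma> * 1))) integrable_on {0..r}"
        by (intro integrable_continuous_real continuous_intros P_cont_r[OF s u])
      show "(\<lambda>\<sigma>. (s + u) * exp ((s + u) * \<sigma>)) integrable_on {0..r}"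
        by (intro integrable_continuous_real continuous_intros)
      fix \<sigma> :: real assume "\<sigma> \<in> {0..r}"
      hence \<sigma>: "\<sigma> \<ge> 0" by simp
      let ?m = "\<Sum>t\<in>SS n. PP' t \<sigma>"
      have m0: "?m \<ge> 0" by (intro sum_nonneg P_nonneg[OF s u \<sigma>])
      have m1: "?m \<le> 1" using Suc.IH[OF \<sigma>] .
      have "(\<Sum>l\<in>SS n. \<Sum>t\<in>SS n. PP' l \<sigma> * PP' t \<sigma> * 1) = ?m * ?m" by (simp add: sum_product)
      moreover have "?m * ?m \<le> 1" using m0 m1 by (simp add: mult_le_one)
      ultimately have "u * (\<Sum>t\<in>SS n. PP' t \<sigma> * 1) + s * (\<Sum>l\<in>SS n. \<Sum>t\<in>SS n. PP' l \<sigma> * PP' t \<sigma> * 1) \<le> u + s"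
        using m1 s u by (simp add: add_mono mult_left_le)
      thus "exp ((s + u) * \<sigma>) * (u * (\<Sum>t\<in>SS n. PP' t \<sigma> * 1) + s * (\<Sum>l\<in>SS n. \<Sum>t\<in>SS n. PP' l \<sigma> * PP' t \<sigma> * 1))
         \<le> (s + u) * exp ((s + u) * \<sigma>)"
        by (simp add: mult.commute add.commute)
    qed
    thus ?thesis by (simp add: mult_left_mono)
  qed
  also have "\<dots> = exp (- (s + u) * r) * exp ((s + u) * r)" by (simp only: exp_int[OF Suc.prems]) simp
  also have "\<dots> = 1" by (simp add: mult_exp_exp algebra_simps)
  finally show ?case .
qed

end

definition WS :: "real \<Rightarrow> real \<Rightarrow> (asg_tree \<Rightarrow> real) \<Rightarrow> nat \<Rightarrow> real \<Rightarrow> real" where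
  "WS s u v n \<sigma> = (\<Sum>t\<in>SS n. asg_prob s u t \<sigma> * v t)"

definition II :: "real \<Rightarrow> real \<Rightarrow> (asg_tree \<Rightarrow> real) \<Rightarrow> real \<Rightarrow> real" where
  "II s u w r = infsum (\<lambda>t. asg_prob s u t r * w t) UNIV"

context
  fixes s u :: real
  assumes s: "s \<ge> 0" and u: "u > 0"
begin

lemma W_props:
  assumes w0: "\<And>t. 0 \<le> w t" and w1: "\<And>t. w t \<le> 1" and r: "r \<ge> 0"
  shows "(\<lambda>n. \<Sum>t\<in>SS n. asg_prob s u t r * w t) \<longlonglongrightarrow> II s u w r"
    and "0 \<le> (\<Sum>t\<in>SS n. asg_prob s u t r * w t)"
    and "(\<Sum>t\<in>SS n. asg_prob s u t r * w t) \<le> (\<Sum>t\<in>SS (Suc n). asg_prob s u t r * w t)"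
    and "(\<Sum>t\<in>SS n. asg_prob s u t r * w t) \<le> 1"
proof -
  have nn: "0 \<le> asg_prob s u t r * w t" for t using P_nonneg[OF s u r] w0 by simp
  have le1: "(\<Sum>t\<in>SS n. asg_prob s u t r * w t) \<le> 1" for n
  proof -
    have "(\<Sum>t\<in>SS n. asg_prob s u t r * w t) \<le> (\<Sum>t\<in>SS n. asg_prob s u t r)"
      by (intro sum_mono mult_right_le_one_le P_nonneg[OF s u r] w0 w1)
    also have "\<dots> \<le> 1" by (rule M_le1[OF s u r])
    finally show ?thesis .
  qed
  show "(\<lambda>n. \<Sum>t\<in>SS n. asg_prob s u t r * w t) \<longlonglongrightarrow> II s u w r"
    unfolding II_def by (rule sum_lim(2)[OF nn le1])
  show "0 \<le> (\<Sum>t\<in>SS n. asg_prob s u t r * w t)" by (intro sum_nonneg nn)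
  show "(\<Sum>t\<in>SS n. asg_prob s u t r * w t) \<le> (\<Sum>t\<in>SS (Suc n). asg_prob s u t r * w t)"
    by (intro sum_mono2 finite_SS SS_mono nn) auto
  show "(\<Sum>t\<in>SS n. asg_prob s u t r * w t) \<le> 1" by (rule le1)
qed

lemma lim_rec:
  fixes w w1 w2 w3 :: "asg_tree \<Rightarrow> real"
  assumes b: "\<And>t. 0 \<le> w t" "\<And>t. w t \<le> 1" "\<And>t. 0 \<le> w1 t" "\<And>t. w1 t \<le> 1"
    "\<And>t. 0 \<le> w2 t" "\<And>t. w2 t \<le> 1" "\<And>t. 0 \<le> w3 t" "\<And>t. w3 t \<le> 1"
    and wM: "\<And>t. w (Mark t) = w1 t" and wB: "\<And>l t. w (Bin l t) = w2 l * w3 t"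
    and r: "r \<ge> 0"
  shows "(\<lambda>\<sigma>. exp ((s + u) * \<sigma>) * (u * II s u w1 \<sigma> + s * (II s u w2 \<sigma> * II s u w3 \<sigma>))) integrable_on {0..r}
     \<and> II s u w r = exp (- (s + u) * r) * (w Leaf + integral {0..r}
         (\<lambda>\<sigma>. exp ((s + u) * \<sigma>) * (u * II s u w1 \<sigma> + s * (II s u w2 \<sigma> * II s u w3 \<sigma>))))"
proof -
  let ?W = "WS s u"
  define F where "F n \<sigma> = exp ((s + u) * \<sigma>) * (u * ?W w1 n \<sigma> + s * (?W w2 n \<sigma> * ?W w3 n \<sigma>))" for n \<sigma>
  show ?thesis
  proof (rule limit_eq[where X="\<lambda>n. WS s u w n r" and F=F])
    fix n
    have eqf: "(\<lambda>\<sigma>. exp ((s + u) * \<sigma>) * (u * (\<Sum>t\<in>SS n. asg_prob s u t \<sigma> * w (Mark t)) + s * (\<Sum>l\<in>SS n. \<Sum>t\<in>SS n. asg_prob s u l \<sigma> * asg_prob s u t \<sigma> * w (Bin l t))))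
       = F n"
      by (auto simp: fun_eq_iff F_def WS_def wM wB sum_product mult_ac)
    show "WS s u w (Suc n) r = exp (- (s + u) * r) * (w Leaf + integral {0..r} (F n))"
      unfolding WS_def rec_sum[OF s u r] eqf[unfolded WS_def] ..
    show "F n integrable_on {0..r}"
      unfolding F_def WS_def by (intro integrable_continuous_real continuous_intros P_cont_r[OF s u])
  next
    fix n \<sigma> assume "\<sigma> \<in> {0..r}"
    hence \<sigma>: "\<sigma> \<ge> 0" by simp
    note p1 = W_props[where w=w1, OF b(3,4) \<sigma>, folded WS_def] and p2 = W_props[where w=w2, OF b(5,6) \<sigma>, folded WS_def]
      and p3 = W_props[where w=w3, OF b(7,8) \<sigma>, folded WS_def]
    show "F n \<sigma> \<le> F (Suc n) \<sigma>" unfolding F_def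
      using p1(2,3)[where n=n] p2(2,3)[where n=n] p3(2,3)[where n=n] p2(2)[where n="Suc n"] p3(2)[where n="Suc n"] s u
      by (intro mult_left_mono add_mono mult_mono) auto
    show "(\<lambda>n. F n \<sigma>) \<longlonglongrightarrow> exp ((s + u) * \<sigma>) * (u * II s u w1 \<sigma> + s * (II s u w2 \<sigma> * II s u w3 \<sigma>))"
      unfolding F_def by (intro tendsto_intros p1(1) p2(1) p3(1))
  next
    show "(\<lambda>n. WS s u w n r) \<longlonglongrightarrow> II s u w r" unfolding WS_def by (rule W_props(1)[OF b(1,2) r])
  qed
qed

end

lemma int00: "integral {a..a::real} f = 0"
  using integral_refl[of a f] unfolding box_real .

context
  fixes s u y0 :: real
  assumes s: "s \<ge> 0" and u: "u > 0" and y0: "0 \<le> y0" "y0 \<le> 1"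
begin

abbreviation "Mf \<equiv> II s u (\<lambda>_. 1)"
abbreviation "Bf \<equiv> II s u (vprob y0)"
abbreviation "Af \<equiv> II s u (anc_type_prob y0)"

lemma M_eq: "r \<ge> 0 \<Longrightarrow> (\<lambda>\<sigma>. exp ((s + u) * \<sigma>) * (u * Mf \<sigma> + s * (Mf \<sigma> * Mf \<sigma>))) integrable_on {0..r}
   \<and> Mf r = exp (- (s + u) * r) * (1 + integral {0..r} (\<lambda>\<sigma>. exp ((s + u) * \<sigma>) * (u * Mf \<sigma> + s * (Mf \<sigma> * Mf \<sigma>))))"
  by (rule lim_rec[OF s u, where w="\<lambda>_. 1" and ?w1.0="\<lambda>_. 1" and ?w2.0="\<lambda>_. 1" and ?w3.0="\<lambda>_. 1"]) simp_all

lemma B_eq: "r \<ge> 0 \<Longrightarrow> (\<lambda>\<sigma>. exp ((s + u) * \<sigma>) * (u * Mf \<sigma> + s * (Bf \<sigma> * Bf \<sigma>))) integrable_on {0..r}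
   \<and> Bf r = exp (- (s + u) * r) * (y0 + integral {0..r} (\<lambda>\<sigma>. exp ((s + u) * \<sigma>) * (u * Mf \<sigma> + s * (Bf \<sigma> * Bf \<sigma>))))"
proof -
  assume r: "r \<ge> 0"
  have "(\<lambda>\<sigma>. exp ((s + u) * \<sigma>) * (u * Mf \<sigma> + s * (Bf \<sigma> * Bf \<sigma>))) integrable_on {0..r}
   \<and> Bf r = exp (- (s + u) * r) * (vprob y0 Leaf + integral {0..r} (\<lambda>\<sigma>. exp ((s + u) * \<sigma>) * (u * Mf \<sigma> + s * (Bf \<sigma> * Bf \<sigma>))))"
    by (rule lim_rec[OF s u, where w="vprob y0" and ?w1.0="\<lambda>_. 1" and ?w2.0="vprob y0" and ?w3.0="vprob y0"])
       (simp_all only: vprob_bounds vprob_Mark vprob_Bin r order_refl zero_le_one)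
  thus ?thesis by (simp only: vprob_Leaf y0)
qed

lemma A_eq: "r \<ge> 0 \<Longrightarrow> (\<lambda>\<sigma>. exp ((s + u) * \<sigma>) * (u * Af \<sigma> + s * (Af \<sigma> * Bf \<sigma>))) integrable_on {0..r}
   \<and> Af r = exp (- (s + u) * r) * (y0 + integral {0..r} (\<lambda>\<sigma>. exp ((s + u) * \<sigma>) * (u * Af \<sigma> + s * (Af \<sigma> * Bf \<sigma>))))"
proof -
  assume r: "r \<ge> 0"
  have "(\<lambda>\<sigma>. exp ((s + u) * \<sigma>) * (u * Af \<sigma> + s * (Af \<sigma> * Bf \<sigma>))) integrable_on {0..r}
   \<and> Af r = exp (- (s + u) * r) * (anc_type_prob y0 Leaf + integral {0..r} (\<lambda>\<sigma>. exp ((s + u) * \<sigma>) * (u * Af \<sigma> + s * (Af \<sigma> * Bf \<sigma>))))"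
    by (rule lim_rec[OF s u, where w="anc_type_prob y0" and ?w1.0="anc_type_prob y0" and ?w2.0="anc_type_prob y0" and ?w3.0="vprob y0"])
       (simp_all only: vprob_bounds atp_bounds atp_Mark atp_Bin r)
  thus ?thesis by (simp only: atp_Leaf y0)
qed

lemma Mc: "continuous_on {0..} Mf" by (rule cont_eq[OF M_eq])
lemma Bc: "continuous_on {0..} Bf" by (rule cont_eq[OF B_eq])
lemma Ac: "continuous_on {0..} Af" by (rule cont_eq[OF A_eq])

lemma ee: "exp (- (s + u) * r) * (exp ((s + u) * r) * z) = z"
proof -
  have "exp (- (s + u) * r) * exp ((s + u) * r) = exp (- (s + u) * r + (s + u) * r)" by (rule mult_exp_exp)
  also have "\<dots> = 1" by (simp add: algebra_simps)
  finally have "exp (- (s + u) * r) * exp ((s + u) * r) = 1" .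
  hence "(exp (- (s + u) * r) * exp ((s + u) * r)) * z = z" by simp
  thus ?thesis by (simp only: mult.assoc)
qed

lemma Md: "r \<ge> 0 \<Longrightarrow> (Mf has_real_derivative (- (s + u) * Mf r + (u * Mf r + s * (Mf r * Mf r)))) (at r within {0..})"
proof -
  assume r: "r \<ge> 0"
  have "(Mf has_real_derivative (- (s + u) * Mf r + exp (- (s + u) * r) * (exp ((s + u) * r) * (u * Mf r + s * (Mf r * Mf r))))) (at r within {0..})"
    by (rule deriv_eq[where G="\<lambda>\<sigma>. exp ((s + u) * \<sigma>) * (u * Mf \<sigma> + s * (Mf \<sigma> * Mf \<sigma>))" and ?x0.0=1 and c="s + u"])
       (rule conjunct2[OF M_eq], assumption, intro continuous_intros Mc, rule r)
  thus ?thesis by (rule DERIV_cong) (simp only: ee)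
qed

lemma Bd: "r \<ge> 0 \<Longrightarrow> (Bf has_real_derivative (- (s + u) * Bf r + (u * Mf r + s * (Bf r * Bf r)))) (at r within {0..})"
proof -
  assume r: "r \<ge> 0"
  have "(Bf has_real_derivative (- (s + u) * Bf r + exp (- (s + u) * r) * (exp ((s + u) * r) * (u * Mf r + s * (Bf r * Bf r))))) (at r within {0..})"
    by (rule deriv_eq[where G="\<lambda>\<sigma>. exp ((s + u) * \<sigma>) * (u * Mf \<sigma> + s * (Bf \<sigma> * Bf \<sigma>))" and ?x0.0=y0 and c="s + u"])
       (rule conjunct2[OF B_eq], assumption, intro continuous_intros Mc Bc, rule r)
  thus ?thesis by (rule DERIV_cong) (simp only: ee)
qed

lemma Ad: "r \<ge> 0 \<Longrightarrow> (Af has_real_derivative (- (s + u) * Af r + (u * Af r + s * (Af r * Bf r)))) (at r within {0..})"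
proof -
  assume r: "r \<ge> 0"
  have "(Af has_real_derivative (- (s + u) * Af r + exp (- (s + u) * r) * (exp ((s + u) * r) * (u * Af r + s * (Af r * Bf r))))) (at r within {0..})"
    by (rule deriv_eq[where G="\<lambda>\<sigma>. exp ((s + u) * \<sigma>) * (u * Af \<sigma> + s * (Af \<sigma> * Bf \<sigma>))" and ?x0.0=y0 and c="s + u"])
       (rule conjunct2[OF A_eq], assumption, intro continuous_intros Ac Bc, rule r)
  thus ?thesis by (rule DERIV_cong) (simp only: ee)
qed

lemma M1: "r \<ge> 0 \<Longrightarrow> Mf r = 1"
proof -
  assume r: "r \<ge> 0"
  have "1 - Mf r = (1 - Mf 0) * exp (integral {0..r} (\<lambda>t. s * Mf t))"
  proof (rule lin_ode[where w="\<lambda>t. 1 - Mf t"])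
    show "continuous_on {0..} (\<lambda>t. s * Mf t)" by (intro continuous_intros Mc)
    fix t :: real assume t: "t \<ge> 0"
    show "((\<lambda>t. 1 - Mf t) has_real_derivative s * Mf t * (1 - Mf t)) (at t within {0..})"
      by (rule DERIV_cong[OF DERIV_diff[OF DERIV_const Md[OF t]]]) (simp add: algebra_simps)
  qed (rule r)
  moreover have "Mf 0 = 1" using M_eq[of 0] by (simp add: int00)
  ultimately show ?thesis by simp
qed

lemma B0: "Bf 0 = y0" using B_eq[of 0] by (simp add: int00)
lemma A0: "Af 0 = y0" using A_eq[of 0] by (simp add: int00)

lemma B_ode: "t \<ge> 0 \<Longrightarrow> (Bf has_real_derivative (- s * Bf t * (1 - Bf t) + u * (1 - Bf t))) (at t within {0..})"
  by (rule DERIV_cong[OF Bd]) (simp_all add: M1 algebra_simps)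

lemma A_formula: "r \<ge> 0 \<Longrightarrow> Af r = y0 * exp (- s * integral {0..r} (\<lambda>\<xi>. 1 - Bf \<xi>))"
proof -
  assume r: "r \<ge> 0"
  have "Af r = Af 0 * exp (integral {0..r} (\<lambda>t. (- s) * (1 - Bf t)))"
  proof (rule lin_ode[where w="Af"])
    show "continuous_on {0..} (\<lambda>t. (- s) * (1 - Bf t))" by (intro continuous_intros Bc)
    fix t :: real assume t: "t \<ge> 0"
    show "(Af has_real_derivative (- s) * (1 - Bf t) * Af t) (at t within {0..})"
      by (rule DERIV_cong[OF Ad[OF t]]) (simp add: algebra_simps)
  qed (rule r)
  thus ?thesis by (simp add: A0)
qed

lemma g_eq: "g s u r y0 = Af r"
  by (simp add: g_def II_def)

end

definition odeS :: "real \<Rightarrow> real \<Rightarrow> (real \<Rightarrow> real) \<Rightarrow> bool" where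
  "odeS s u y \<longleftrightarrow> (\<forall>t\<ge>0. (y has_real_derivative (- s * y t * (1 - y t) + u * (1 - y t))) (at t within {0..}))"

lemma ode_D: "odeS s u y \<Longrightarrow> t \<ge> 0 \<Longrightarrow> (y has_real_derivative (- s * y t * (1 - y t) + u * (1 - y t))) (at t within {0..})"
  unfolding odeS_def by blast

lemma ode_cont: "odeS s u y \<Longrightarrow> continuous_on {0..} y"
  by (rule cont_from_deriv, erule ode_D)

lemma ode_uniq:
  assumes y: "odeS s u y" and z: "odeS s u z" and e: "y 0 = z 0" and r: "r \<ge> 0"
  shows "y r = z r"
proof -
  have "y r - z r = (y 0 - z 0) * exp (integral {0..r} (\<lambda>t. - (s + u) + s * (y t + z t)))"
  proof (rule lin_ode[where w="\<lambda>t. y t - z t"])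
    show "continuous_on {0..} (\<lambda>t. - (s + u) + s * (y t + z t))"
      by (intro continuous_intros ode_cont[OF y] ode_cont[OF z])
    fix t :: real assume t: "t \<ge> 0"
    show "((\<lambda>t. y t - z t) has_real_derivative (- (s + u) + s * (y t + z t)) * (y t - z t)) (at t within {0..})"
      by (rule DERIV_cong[OF DERIV_diff[OF ode_D[OF y t] ode_D[OF z t]]]) (simp add: algebra_simps)
  qed (rule r)
  thus ?thesis using e by simp
qed

lemma ode_I1:
  assumes y: "odeS s u y" and r: "r \<ge> 0"
  shows "u - s * y r = (u - s * y 0) * exp (- s * integral {0..r} (\<lambda>\<xi>. 1 - y \<xi>))"
proof -
  have "u - s * y r = (u - s * y 0) * exp (integral {0..r} (\<lambda>t. (- s) * (1 - y t)))"
  proof (rule lin_ode[where w="\<lambda>t. u - s * y t"])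
    show "continuous_on {0..} (\<lambda>t. (- s) * (1 - y t))"
      by (intro continuous_intros ode_cont[OF y])
    fix t :: real assume t: "t \<ge> 0"
    show "((\<lambda>t. u - s * y t) has_real_derivative (- s) * (1 - y t) * (u - s * y t)) (at t within {0..})"
      by (rule DERIV_cong[OF DERIV_diff[OF DERIV_const DERIV_cmult[OF ode_D[OF y t]]]]) (simp add: algebra_simps)
  qed (rule r)
  thus ?thesis by simp
qed

lemma ode_I2:
  assumes y: "odeS s u y" and r: "r \<ge> 0"
  shows "1 - y r = (1 - y 0) * exp (- (u - s) * r) * exp (- s * integral {0..r} (\<lambda>\<xi>. 1 - y \<xi>))"
proof -
  have "1 - y r = (1 - y 0) * exp (integral {0..r} (\<lambda>t. - (u - s * y t)))"
  proof (rule lin_ode[where w="\<lambda>t. 1 - y t"])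
    show "continuous_on {0..} (\<lambda>t. - (u - s * y t))"
      by (intro continuous_intros ode_cont[OF y])
    fix t :: real assume t: "t \<ge> 0"
    show "((\<lambda>t. 1 - y t) has_real_derivative - (u - s * y t) * (1 - y t)) (at t within {0..})"
      by (rule DERIV_cong[OF DERIV_diff[OF DERIV_const ode_D[OF y t]]]) (simp add: algebra_simps)
  qed (rule r)
  also have "integral {0..r} (\<lambda>t. - (u - s * y t)) = - (u - s) * r + (- s * integral {0..r} (\<lambda>\<xi>. 1 - y \<xi>))"
  proof -
    have c: "continuous_on {0..r} y" by (rule continuous_on_subset[OF ode_cont[OF y]]) auto
    have "integral {0..r} (\<lambda>t. - (u - s * y t)) = integral {0..r} (\<lambda>t. (- (u - s)) + (- s) * (1 - y t))"
      by (rule integral_cong) (simp add: algebra_simps)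
    also have "\<dots> = integral {0..r} (\<lambda>t. - (u - s)) + integral {0..r} (\<lambda>t. (- s) * (1 - y t))"
      by (rule integral_add) (auto intro!: integrable_continuous_real continuous_intros c)
    also have "\<dots> = - (u - s) * r + (- s * integral {0..r} (\<lambda>\<xi>. 1 - y \<xi>))"
      using r by simp
    finally show ?thesis .
  qed
  finally show ?thesis by (simp only: exp_add mult.assoc)
qed

definition Lv :: "real \<Rightarrow> real \<Rightarrow> real \<Rightarrow> real" where
  "Lv s u y0 = (if s = 0 then y0 else if u \<le> s then (if y0 = 1 then 1 else 0) else y0 * (u - s) / (u - s * y0))"

lemma exp_pos_at_top:
  fixes a :: real assumes a: "a > 0" shows "filterlim (\<lambda>r. exp (a * r)) at_top at_top"
  by (rule filterlim_compose[OF exp_at_top filterlim_tendsto_pos_mult_at_top[OF tendsto_const a filterlim_ident]])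

lemma exp_neg_0:
  fixes a :: real assumes a: "a > 0" shows "((\<lambda>r. exp (- a * r)) \<longlongrightarrow> 0) at_top"
proof -
  have "- a < 0" using a by simp
  show ?thesis
    by (rule filterlim_compose[OF exp_at_bot filterlim_tendsto_neg_mult_at_bot[OF tendsto_const \<open>- a < 0\<close> filterlim_ident]])
qed

context
  fixes s u y0 :: real
  assumes s: "s \<ge> 0" and u: "u > 0" and y0: "0 \<le> y0" "y0 \<le> 1"
begin

abbreviation "Bf' \<equiv> II s u (vprob y0)"
abbreviation "Ef r \<equiv> exp (- s * integral {0..r} (\<lambda>\<xi>. 1 - Bf' \<xi>))"

lemma B_odeS: "odeS s u Bf'"
  unfolding odeS_def using B_ode[OF s u y0] by blast

lemma g_E: "r \<ge> 0 \<Longrightarrow> g s u r y0 = y0 * Ef r"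
  using g_eq[OF s u y0] A_formula[OF s u y0] by simp

lemma I1': "r \<ge> 0 \<Longrightarrow> u - s * Bf' r = (u - s * y0) * Ef r"
  using ode_I1[OF B_odeS] B0[OF s u y0] by simp

lemma I2': "r \<ge> 0 \<Longrightarrow> 1 - Bf' r = (1 - y0) * exp (- (u - s) * r) * Ef r"
  using ode_I2[OF B_odeS] B0[OF s u y0] by simp

lemma key: "r \<ge> 0 \<Longrightarrow> Ef r * ((u - s * y0) - s * (1 - y0) * exp (- (u - s) * r)) = u - s"
proof -
  assume r: "r \<ge> 0"
  have "Ef r * ((u - s * y0) - s * (1 - y0) * exp (- (u - s) * r))
      = (u - s * y0) * Ef r - s * ((1 - y0) * exp (- (u - s) * r) * Ef r)" by (simp add: algebra_simps)
  also have "\<dots> = (u - s * Bf' r) - s * (1 - Bf' r)" by (simp only: I1'[OF r] I2'[OF r])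
  also have "\<dots> = u - s" by (simp add: algebra_simps)
  finally show ?thesis .
qed

lemma lim_g: "((\<lambda>r. g s u r y0) \<longlongrightarrow> Lv s u y0) at_top"
proof -
  have ev: "eventually (\<lambda>r. y0 * Ef r = g s u r y0) at_top"
    using eventually_ge_at_top[of 0] by eventually_elim (simp add: g_E)
  have "((\<lambda>r. y0 * Ef r) \<longlongrightarrow> Lv s u y0) at_top"
  proof (cases "s = 0")
    case True
    thus ?thesis by (simp add: Lv_def)
  next
    case sn: False
    hence sp: "s > 0" using s by simp
    show ?thesis
    proof (cases "y0 = 0")
      case True thus ?thesis by (simp add: Lv_def)
    next
      case y0n: False
      show ?thesis
      proof (cases "y0 = 1")
        case True
        have ev1: "eventually (\<lambda>r. 1 = y0 * Ef r) at_top"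
          using eventually_ge_at_top[of 0]
        proof eventually_elim
          case (elim r)
          have "integral {0..r} (\<lambda>\<xi>. 1 - Bf' \<xi>) = integral {0..r} (\<lambda>\<xi>. 0)"
            by (rule integral_cong) (use I2' True in auto)
          thus ?case using True by simp
        qed
        have "Lv s u y0 = 1" using True sn u by (auto simp: Lv_def)
        thus ?thesis using tendsto_cong[THEN iffD1, OF ev1 tendsto_const] by simp
      next
        case y1: False
        have y0p: "0 < y0" and y0l: "y0 < 1" using y0 y0n y1 by auto
        consider "u > s" | "u < s" | "u = s" by linarith
        thus ?thesis
        proof cases
          case 1
          define D where "D r = (u - s * y0) - s * (1 - y0) * exp (- (u - s) * r)" for r
          have "eventually (\<lambda>r. y0 * ((u - s) / D r) = y0 * Ef r) at_top"
            using eventually_ge_at_top[of 0]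
          proof eventually_elim
            case (elim r)
            have k: "Ef r * D r = u - s" unfolding D_def by (rule key[OF elim])
            hence dn: "D r \<noteq> 0" using 1 by auto
            have "(u - s) / D r = Ef r" unfolding k[symmetric] using dn by simp
            thus ?case by simp
          qed
          moreover have "((\<lambda>r. y0 * ((u - s) / D r)) \<longlongrightarrow> y0 * ((u - s) / ((u - s * y0) - s * (1 - y0) * 0))) at_top"
          proof -
            have "s * y0 \<le> s" using s y0 by (simp add: mult_left_le)
            hence "(u - s * y0) - s * (1 - y0) * 0 \<noteq> 0" using 1 by simp
            moreover have "(D \<longlongrightarrow> (u - s * y0) - s * (1 - y0) * 0) at_top"
              unfolding D_def using 1 by (intro tendsto_intros exp_neg_0) simp
            ultimately show ?thesis by (intro tendsto_intros)
          qed
          ultimately have "((\<lambda>r. y0 * Ef r) \<longlongrightarrow> y0 * ((u - s) / (u - s * y0))) at_top"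
            by (simp add: tendsto_cong[symmetric])
          thus ?thesis using 1 sn by (simp add: Lv_def)
        next
          case 2
          define K where "K = s * (1 - y0)"
          have Kp: "K > 0" using sp y0l by (simp add: K_def)
          have "eventually (\<lambda>r. y0 * ((s - u) / ((s * y0 - u) + K * exp ((s - u) * r))) = y0 * Ef r) at_top"
            using eventually_ge_at_top[of 0]
          proof eventually_elim
            case (elim r)
            have k: "Ef r * ((u - s * y0) - s * (1 - y0) * exp (- (u - s) * r)) = u - s" by (rule key[OF elim])
            have "- (u - s) * r = (s - u) * r" by simp
            hence k2: "Ef r * ((s * y0 - u) + K * exp ((s - u) * r)) = s - u"
              using k unfolding K_def by (simp add: algebra_simps)
            define X where "X = (s * y0 - u) + K * exp ((s - u) * r)"
            have k3: "Ef r * X = s - u" using k2 unfolding X_def .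
            hence dn: "X \<noteq> 0" using 2 by auto
            have "(s - u) / X = Ef r" using k3 dn by (simp add: divide_eq_eq)
            thus ?case unfolding X_def by simp
          qed
          moreover have "((\<lambda>r. y0 * ((s - u) / ((s * y0 - u) + K * exp ((s - u) * r)))) \<longlongrightarrow> y0 * 0) at_top"
          proof (intro tendsto_mult tendsto_const tendsto_divide_0[OF tendsto_const] filterlim_at_top_imp_at_infinity)
            show "filterlim (\<lambda>r. (s * y0 - u) + K * exp ((s - u) * r)) at_top at_top"
              by (rule filterlim_tendsto_add_at_top[OF tendsto_const filterlim_tendsto_pos_mult_at_top[OF tendsto_const Kp exp_pos_at_top]])
                 (use 2 in simp)
          qed
          ultimately have "((\<lambda>r. y0 * Ef r) \<longlongrightarrow> 0) at_top"
            by (simp add: tendsto_cong[symmetric])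
          thus ?thesis using 2 sn y1 by (simp add: Lv_def)
        next
          case 3
          define K where "K = s * (1 - y0)"
          have Kp: "K > 0" using sp y0l by (simp add: K_def)
          have Bc': "continuous_on {0..} (\<lambda>\<xi>. 1 - Bf' \<xi>)" by (intro continuous_intros Bc[OF s u y0])
          have h: "exp (s * integral {0..r} (\<lambda>\<xi>. 1 - Bf' \<xi>)) - K * r = 1" if r: "r \<ge> 0" for r
          proof -
            have "exp (s * integral {0..r} (\<lambda>\<xi>. 1 - Bf' \<xi>)) - K * r
                = (exp (s * integral {0..0} (\<lambda>\<xi>. 1 - Bf' \<xi>)) - K * 0) * exp (integral {0..r} (\<lambda>_. 0))"
            proof (rule lin_ode[where w="\<lambda>r. exp (s * integral {0..r} (\<lambda>\<xi>. 1 - Bf' \<xi>)) - K * r"])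
              fix t :: real assume t: "t \<ge> 0"
              have i: "((\<lambda>r. integral {0..r} (\<lambda>\<xi>. 1 - Bf' \<xi>)) has_real_derivative 1 - Bf' t) (at t within {0..})"
                using D_int[OF Bc' t] by simp
              have d: "((\<lambda>r. exp (s * integral {0..r} (\<lambda>\<xi>. 1 - Bf' \<xi>)) - K * r) has_real_derivative
                   exp (s * integral {0..t} (\<lambda>\<xi>. 1 - Bf' \<xi>)) * (s * (1 - Bf' t)) - K * 1) (at t within {0..})"
                by (intro DERIV_diff DERIV_cmult DERIV_ident DERIV_chain2[OF DERIV_exp] i)
              let ?I = "integral {0..t} (\<lambda>\<xi>. 1 - Bf' \<xi>)"
              have hb: "1 - Bf' t = (1 - y0) * Ef t" using I2'[OF t] 3 by simp
              have e1: "exp (s * ?I) * exp (- s * ?I) = 1" by (simp add: exp_minus_inverse)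
              have "exp (s * ?I) * (s * (1 - Bf' t)) = K * (exp (s * ?I) * exp (- s * ?I))"
                unfolding hb K_def by (simp only: mult_ac)
              hence "exp (s * integral {0..t} (\<lambda>\<xi>. 1 - Bf' \<xi>)) * (s * (1 - Bf' t)) = K"
                using e1 by simp
              thus "((\<lambda>r. exp (s * integral {0..r} (\<lambda>\<xi>. 1 - Bf' \<xi>)) - K * r) has_real_derivative
                   0 * (exp (s * integral {0..t} (\<lambda>\<xi>. 1 - Bf' \<xi>)) - K * t)) (at t within {0..})"
                using d by simp
            qed (auto intro: r)
            thus ?thesis by (simp add: int00)
          qed
          have ev3: "eventually (\<lambda>r. y0 * inverse (1 + K * r) = y0 * Ef r) at_top"
            using eventually_ge_at_top[of 0]
          proof eventually_elim
            case (elim r)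
            have "exp (s * integral {0..r} (\<lambda>\<xi>. 1 - Bf' \<xi>)) = 1 + K * r" using h[OF elim] by simp
            thus ?case by (simp add: exp_minus)
          qed
          have l3: "((\<lambda>r. y0 * inverse (1 + K * r)) \<longlongrightarrow> y0 * 0) at_top"
            by (intro tendsto_mult tendsto_const tendsto_inverse_0_at_top
                filterlim_tendsto_add_at_top[OF tendsto_const filterlim_tendsto_pos_mult_at_top[OF tendsto_const Kp filterlim_ident]])
          have "((\<lambda>r. y0 * Ef r) \<longlongrightarrow> y0 * 0) at_top"
            by (rule tendsto_cong[THEN iffD1, OF ev3 l3])
          hence "((\<lambda>r. y0 * Ef r) \<longlongrightarrow> 0) at_top" by simp
          thus ?thesis using 3 sn y1 by (simp add: Lv_def)
        qed
      qed
    qed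
  qed
  thus ?thesis using tendsto_cong[OF ev] by simp
qed

end

theorem proposition7p1:
  fixes s u :: real
  assumes "s \<ge> 0" and "u > 0"
  shows "(\<forall>y0 y r. y0 \<in> {0..1} \<and> y 0 = y0 \<and>
            (\<forall>t\<ge>0. (y has_real_derivative (- s * y t * (1 - y t) + u * (1 - y t))) (at t within {0..}))
            \<and> r \<ge> 0 \<longrightarrow>
            g s u r y0 = y0 * exp (- s * integral {0..r} (\<lambda>\<xi>. 1 - y \<xi>)) \<and>
            (y0 \<in> {0..<1} \<and> s * y0 \<noteq> u \<longrightarrow> g s u r y0 = y0 * (u - s * y r) / (u - s * y0)) \<and>
            ((y0 = 1 \<or> s * y0 = u) \<longrightarrow> g s u r y0 = y0 * exp (- r * s * (1 - y0))))
       \<and> (\<forall>y0\<in>{0..1}. \<exists>L. ((\<lambda>r. g s u r y0) \<longlongrightarrow> L) at_top)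
       \<and> (s = 0 \<longrightarrow> (\<forall>y0\<in>{0..1}. ((\<lambda>r. g s u r y0) \<longlongrightarrow> y0) at_top))
       \<and> (u \<le> s \<longrightarrow> (\<forall>y0\<in>{0..<1}. ((\<lambda>r. g s u r y0) \<longlongrightarrow> 0) at_top)
                    \<and> ((\<lambda>r. g s u r 1) \<longlongrightarrow> 1) at_top)
       \<and> (u > s \<longrightarrow> (\<forall>y0\<in>{0..1}. ((\<lambda>r. g s u r y0) \<longlongrightarrow> y0 * (u - s) / (u - s * y0)) at_top))"
proof -
  note su = assms
  have part1: "\<forall>y0 y r. y0 \<in> {0..1} \<and> y 0 = y0 \<and>
            (\<forall>t\<ge>0. (y has_real_derivative (- s * y t * (1 - y t) + u * (1 - y t))) (at t within {0..}))
            \<and> r \<ge> 0 \<longrightarrow>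
            g s u r y0 = y0 * exp (- s * integral {0..r} (\<lambda>\<xi>. 1 - y \<xi>)) \<and>
            (y0 \<in> {0..<1} \<and> s * y0 \<noteq> u \<longrightarrow> g s u r y0 = y0 * (u - s * y r) / (u - s * y0)) \<and>
            ((y0 = 1 \<or> s * y0 = u) \<longrightarrow> g s u r y0 = y0 * exp (- r * s * (1 - y0)))"
  proof (intro allI impI)
    fix y0 r :: real and y :: "real \<Rightarrow> real"
    assume H: "y0 \<in> {0..1} \<and> y 0 = y0 \<and>
            (\<forall>t\<ge>0. (y has_real_derivative (- s * y t * (1 - y t) + u * (1 - y t))) (at t within {0..}))
            \<and> r \<ge> 0"
    hence y0b: "0 \<le> y0" "y0 \<le> 1" and y00: "y 0 = y0" and ode: "odeS s u y" and r: "r \<ge> 0"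
      by (auto simp: odeS_def)
    have yB: "y \<xi> = II s u (vprob y0) \<xi>" if "\<xi> \<ge> 0" for \<xi>
      using ode_uniq[OF ode B_odeS[OF su y0b] _ that] y00 B0[OF su y0b] by simp
    have intEq: "integral {0..r} (\<lambda>\<xi>. 1 - y \<xi>) = integral {0..r} (\<lambda>\<xi>. 1 - II s u (vprob y0) \<xi>)"
      by (rule integral_cong) (simp add: yB)
    have gE: "g s u r y0 = y0 * exp (- s * integral {0..r} (\<lambda>\<xi>. 1 - y \<xi>))"
      using g_E[OF su y0b r] intEq by simp
    have I1: "u - s * y r = (u - s * y0) * exp (- s * integral {0..r} (\<lambda>\<xi>. 1 - y \<xi>))"
      using ode_I1[OF ode r] y00 by simp
    have c2: "g s u r y0 = y0 * (u - s * y r) / (u - s * y0)" if "s * y0 \<noteq> u"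
    proof -
      have "u - s * y0 \<noteq> 0" using that by simp
      thus ?thesis unfolding I1 gE by simp
    qed
    have c3: "g s u r y0 = y0 * exp (- r * s * (1 - y0))" if "y0 = 1 \<or> s * y0 = u"
      using that
    proof
      assume y1: "y0 = 1"
      have "integral {0..r} (\<lambda>\<xi>. 1 - y \<xi>) = integral {0..r} (\<lambda>\<xi>. 0)"
        by (rule integral_cong) (use ode_I2[OF ode] y00 y1 in auto)
      thus ?thesis using gE y1 by simp
    next
      assume e: "s * y0 = u"
      hence sn: "s \<noteq> 0" using su by auto
      have "y \<xi> = y0" if "\<xi> \<in> {0..r}" for \<xi>
      proof -
        have "u - s * y \<xi> = 0" using ode_I1[OF ode, of \<xi>] that y00 e by simp
        hence "s * y \<xi> = s * y0" using e by linarith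
        thus ?thesis using sn by simp
      qed
      hence "integral {0..r} (\<lambda>\<xi>. 1 - y \<xi>) = integral {0..r} (\<lambda>\<xi>. 1 - y0)"
        by (intro integral_cong) simp
      also have "\<dots> = r * (1 - y0)" using r by simp
      finally show ?thesis using gE by (simp add: mult_ac)
    qed
    show "g s u r y0 = y0 * exp (- s * integral {0..r} (\<lambda>\<xi>. 1 - y \<xi>)) \<and>
            (y0 \<in> {0..<1} \<and> s * y0 \<noteq> u \<longrightarrow> g s u r y0 = y0 * (u - s * y r) / (u - s * y0)) \<and>
            ((y0 = 1 \<or> s * y0 = u) \<longrightarrow> g s u r y0 = y0 * exp (- r * s * (1 - y0)))"
      using gE c2 c3 by blast
  qed
  have lim: "((\<lambda>r. g s u r y0) \<longlongrightarrow> Lv s u y0) at_top" if "y0 \<in> {0..1}" for y0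
    using lim_g[OF su] that by simp
  show ?thesis
  proof (intro conjI)
    show "\<forall>y0\<in>{0..1}. \<exists>L. ((\<lambda>r. g s u r y0) \<longlongrightarrow> L) at_top" using lim by blast
    show "s = 0 \<longrightarrow> (\<forall>y0\<in>{0..1}. ((\<lambda>r. g s u r y0) \<longlongrightarrow> y0) at_top)"
    proof (intro impI ballI)
      fix y0 :: real assume "s = 0" "y0 \<in> {0..1}"
      thus "((\<lambda>r. g s u r y0) \<longlongrightarrow> y0) at_top" using lim[of y0] by (simp add: Lv_def)
    qed
    show "u \<le> s \<longrightarrow> (\<forall>y0\<in>{0..<1}. ((\<lambda>r. g s u r y0) \<longlongrightarrow> 0) at_top) \<and> ((\<lambda>r. g s u r 1) \<longlongrightarrow> 1) at_top"
    proof
      assume us: "u \<le> s"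
      hence sn: "s \<noteq> 0" using su by auto
      show "(\<forall>y0\<in>{0..<1}. ((\<lambda>r. g s u r y0) \<longlongrightarrow> 0) at_top) \<and> ((\<lambda>r. g s u r 1) \<longlongrightarrow> 1) at_top"
      proof
        show "\<forall>y0\<in>{0..<1}. ((\<lambda>r. g s u r y0) \<longlongrightarrow> 0) at_top"
        proof
          fix y0 :: real assume "y0 \<in> {0..<1}"
          thus "((\<lambda>r. g s u r y0) \<longlongrightarrow> 0) at_top" using lim[of y0] us sn by (simp add: Lv_def)
        qed
        show "((\<lambda>r. g s u r 1) \<longlongrightarrow> 1) at_top" using lim[of 1] us sn by (simp add: Lv_def)
      qed
    qed
    show "u > s \<longrightarrow> (\<forall>y0\<in>{0..1}. ((\<lambda>r. g s u r y0) \<longlongrightarrow> y0 * (u - s) / (u - s * y0)) at_top)"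
    proof (intro impI ballI)
      fix y0 :: real assume us: "u > s" and y: "y0 \<in> {0..1}"
      show "((\<lambda>r. g s u r y0) \<longlongrightarrow> y0 * (u - s) / (u - s * y0)) at_top"
      proof (cases "s = 0")
        case True thus ?thesis using lim[OF y] su by (simp add: Lv_def)
      next
        case False thus ?thesis using lim[OF y] us by (simp add: Lv_def)
      qed
    qed
  qed (rule part1)
qed

end
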